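(* Let $R=(S^0,\dots,S^T)$ be any $T$-covering in a symmetric congestion game in which every delay function is $f(x)=x$. Then $C(S^T)\le 2\Gamma(R)$.
   Context: A congestion game has players $N=\{1,\dots,n\}$, a finite resource set $E$ and strategy sets $\Sigma_i\subseteq 2^E$; it is symmetric if all $\Sigma_i$ equal a common set $\Sigma$. For a profile $S=(s_1,\dots,s_n)$, $n_e(S)=|\{i:e\in s_i\}|$. Here all delays are $f(x)=x$, so $c_i(S)=\sum_{e\in s_i}n_e(S)$ and $C(S)=\sum_i c_i(S)=\sum_{e\in E}n_e(S)^2$. Fix an optimal profile $S^*$ minimizing $C$. A best response of player $i$ in $S$ is a strategy $s_i^b\in\Sigma_i$ minimizing $c_i(S_{-i},\cdot)$ (where $(S_{-i},s_i')$ replaces $s_i$ by $s_i'$); if no strategy strictly decreases $i$'s cost, the best response is $s_i$ itself. A $T$-covering is a sequence of profiles $R=(S^0,\dots,S^T)$ with players $\pi(1),\dots,\pi(T)$ such that for each $1\le t\le T$, $S^t=(S^{t-1}_{-\pi(t)},s')$ with $s'$ a best response of $\pi(t)$ in $S^{t-1}$, and every player occurs at least once among $\pi(1),\dots,\pi(T)$. For each player $i$, $\mathrm{last}(i)=\max\{t:\pi(t)=i\}$. Define $\Gamma(R)=\frac1n\sum_{i=1}^n\sum_{e\in E}n_e(S^* )\bigl(n_e(S^{\mathrm{last}(i)-1})+1\bigr)$. *)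

theory Defs
  imports Complex_Main
begin

text \<open>Players are 1..n; a profile is a function from players to strategies
(sets of resources). Values outside 1..n are irrelevant.\<close>

type_synonym 'e profile = "nat \<Rightarrow> 'e set"

definition load :: "nat \<Rightarrow> 'e profile \<Rightarrow> 'e \<Rightarrow> nat" where
  "load n S e = card {j \<in> {1..n}. e \<in> S j}"

definition pcost :: "nat \<Rightarrow> 'e profile \<Rightarrow> nat \<Rightarrow> nat" where
  "pcost n S i = (\<Sum>e\<in>S i. load n S e)"

definition social_cost :: "nat \<Rightarrow> 'e profile \<Rightarrow> nat" where
  "social_cost n S = (\<Sum>i\<in>{1..n}. pcost n S i)"

definition valid_profile :: "nat \<Rightarrow> 'e set set \<Rightarrow> 'e profile \<Rightarrow> bool" where
  "valid_profile n \<Sigma> S \<longleftrightarrow> (\<forall>i\<in>{1..n}. S i \<in> \<Sigma>)"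

definition optimal_profile :: "nat \<Rightarrow> 'e set set \<Rightarrow> 'e profile \<Rightarrow> bool" where
  "optimal_profile n \<Sigma> Sopt \<longleftrightarrow> valid_profile n \<Sigma> Sopt \<and>
     (\<forall>S. valid_profile n \<Sigma> S \<longrightarrow> social_cost n Sopt \<le> social_cost n S)"

definition best_response :: "nat \<Rightarrow> 'e set set \<Rightarrow> 'e profile \<Rightarrow> nat \<Rightarrow> 'e set \<Rightarrow> bool" where
  "best_response n \<Sigma> S i s' \<longleftrightarrow> s' \<in> \<Sigma> \<and>
     (\<forall>s''\<in>\<Sigma>. pcost n (S(i := s')) i \<le> pcost n (S(i := s'')) i) \<and>
     ((\<forall>s''\<in>\<Sigma>. pcost n S i \<le> pcost n (S(i := s'')) i) \<longrightarrow> s' = S i)"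

definition is_covering :: "nat \<Rightarrow> 'e set set \<Rightarrow> nat \<Rightarrow> (nat \<Rightarrow> 'e profile) \<Rightarrow> (nat \<Rightarrow> nat) \<Rightarrow> bool" where
  "is_covering n \<Sigma> T S \<pi> \<longleftrightarrow> valid_profile n \<Sigma> (S 0) \<and>
     (\<forall>t\<in>{1..T}. \<pi> t \<in> {1..n} \<and> best_response n \<Sigma> (S (t - 1)) (\<pi> t) (S t (\<pi> t)) \<and>
        (\<forall>j\<in>{1..n}. j \<noteq> \<pi> t \<longrightarrow> S t j = S (t - 1) j)) \<and>
     (\<forall>i\<in>{1..n}. \<exists>t\<in>{1..T}. \<pi> t = i)"

definition last_move :: "nat \<Rightarrow> (nat \<Rightarrow> nat) \<Rightarrow> nat \<Rightarrow> nat" where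
  "last_move T \<pi> i = Max {t \<in> {1..T}. \<pi> t = i}"

definition Gamma :: "nat \<Rightarrow> 'e set \<Rightarrow> 'e profile \<Rightarrow> nat \<Rightarrow> (nat \<Rightarrow> 'e profile) \<Rightarrow> (nat \<Rightarrow> nat) \<Rightarrow> real" where
  "Gamma n E Sopt T S \<pi> = (1 / real n) *
     (\<Sum>i\<in>{1..n}. \<Sum>e\<in>E. real (load n Sopt e) * (real (load n (S (last_move T \<pi> i - 1)) e) + 1))"

end

theory Submission imports Defs begin

lemma load_cong: "(\<forall>j\<in>{1..n}. S j = S' j) \<Longrightarrow> load n S e = load n S' e"
  unfolding load_def by (rule arg_cong[where f=card]) auto

lemma pcost_cong: "i \<in> {1..n} \<Longrightarrow> (\<forall>j\<in>{1..n}. S j = S' j) \<Longrightarrow> pcost n S i = pcost n S' i"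
  unfolding pcost_def using load_cong[of n S S'] by auto

lemma load_upd: "load n (S(i:=x)) e \<le> load n S e + 1"
proof -
  have "{j \<in> {1..n}. e \<in> (S(i:=x)) j} \<subseteq> insert i {j \<in> {1..n}. e \<in> S j}" by auto
  hence "card {j \<in> {1..n}. e \<in> (S(i:=x)) j} \<le> card (insert i {j \<in> {1..n}. e \<in> S j})"
    by (intro card_mono) auto
  also have "\<dots> \<le> card {j \<in> {1..n}. e \<in> S j} + 1" by (simp add: card_insert_if)
  finally show ?thesis unfolding load_def .
qed

lemma swap_sum:
  fixes g :: "'j \<Rightarrow> 'e \<Rightarrow> 'a::comm_monoid_add"
  assumes "finite E" "finite J" "\<forall>j\<in>J. A j \<subseteq> E"
  shows "(\<Sum>j\<in>J. \<Sum>e\<in>A j. g j e) = (\<Sum>e\<in>E. \<Sum>j\<in>{j\<in>J. e \<in> A j}. g j e)"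
proof -
  have "(\<Sum>j\<in>J. \<Sum>e\<in>A j. g j e) = (\<Sum>j\<in>J. \<Sum>e\<in>E. if e \<in> A j then g j e else 0)"
  proof (rule sum.cong[OF refl])
    fix j assume "j \<in> J"
    hence "A j = {e\<in>E. e \<in> A j}" using assms(3) by auto
    thus "(\<Sum>e\<in>A j. g j e) = (\<Sum>e\<in>E. if e \<in> A j then g j e else 0)"
      using sum.inter_filter[OF assms(1), of "g j" "\<lambda>e. e \<in> A j"] by simp
  qed
  also have "\<dots> = (\<Sum>e\<in>E. \<Sum>j\<in>J. if e \<in> A j then g j e else 0)" by (rule sum.swap)
  also have "\<dots> = (\<Sum>e\<in>E. \<Sum>j\<in>{j\<in>J. e \<in> A j}. g j e)"
    by (rule sum.cong[OF refl], rule sum.inter_filter[OF assms(2), symmetric])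
  finally show ?thesis .
qed

lemma rank_sum:
  fixes f :: "'a \<Rightarrow> nat"
  assumes "finite A"
  shows "inj_on f A \<Longrightarrow> 2 * (\<Sum>a\<in>A. card {b\<in>A. f b < f a} + 1) = card A * (card A + 1)"
  using assms
proof (induction A rule: finite_ranking_induct[where f=f])
  case empty then show ?case by simp
next
  case (insert x S)
  show ?case
  proof (cases "x \<in> S")
    case True then show ?thesis using insert by (simp add: insert_absorb)
  next
    case False
    have inj: "inj_on f S" using insert.prems by (auto simp: inj_on_def)
    have lt: "\<And>y. y \<in> S \<Longrightarrow> f y < f x"
  proof -
    fix y assume y: "y \<in> S"
    have "f y \<noteq> f x" using insert.prems False y by (auto simp: inj_on_def)
    thus "f y < f x" using insert(2)[OF y] by simp
  qed
    have cx: "{b\<in>insert x S. f b < f x} = S" using lt by auto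
    have ca: "\<And>a. a \<in> S \<Longrightarrow> {b\<in>insert x S. f b < f a} = {b\<in>S. f b < f a}"
      using lt by fastforce
    have "(\<Sum>a\<in>insert x S. card {b\<in>insert x S. f b < f a} + 1)
       = card S + 1 + (\<Sum>a\<in>S. card {b\<in>S. f b < f a} + 1)"
      using False insert(1) cx ca by (simp add: sum.insert)
    then show ?thesis using insert.IH[OF inj] False insert(1) by (simp add: algebra_simps)
  qed
qed


theorem lemma5:
  fixes n T :: nat and E :: "'e set" and \<Sigma> :: "'e set set"
    and Sopt :: "'e profile" and S :: "nat \<Rightarrow> 'e profile" and \<pi> :: "nat \<Rightarrow> nat"
  assumes "finite E"
    and "\<forall>s\<in>\<Sigma>. s \<subseteq> E"
    and "optimal_profile n \<Sigma> Sopt"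
    and "is_covering n \<Sigma> T S \<pi>"
  shows "real (social_cost n (S T)) \<le> 2 * Gamma n E Sopt T S \<pi>"
proof -
  note fE = assms(1) and sub = assms(2)
  have v0: "valid_profile n \<Sigma> (S 0)"
    and step: "\<And>t. t \<in> {1..T} \<Longrightarrow> \<pi> t \<in> {1..n} \<and> best_response n \<Sigma> (S (t - 1)) (\<pi> t) (S t (\<pi> t)) \<and>
        (\<forall>j\<in>{1..n}. j \<noteq> \<pi> t \<longrightarrow> S t j = S (t - 1) j)"
    and cov: "\<And>i. i \<in> {1..n} \<Longrightarrow> \<exists>t\<in>{1..T}. \<pi> t = i"
    using assms(4) unfolding is_covering_def by auto
  have vopt: "\<And>j. j \<in> {1..n} \<Longrightarrow> Sopt j \<in> \<Sigma>"
    using assms(3) unfolding optimal_profile_def valid_profile_def by auto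
  have valid: "\<And>t j. t \<le> T \<Longrightarrow> j \<in> {1..n} \<Longrightarrow> S t j \<in> \<Sigma>"
  proof -
    fix t j assume "t \<le> T" "j \<in> {1..n}"
    thus "S t j \<in> \<Sigma>"
    proof (induction t)
      case 0 then show ?case using v0 unfolding valid_profile_def by auto
    next
      case (Suc t)
      have st: "Suc t \<in> {1..T}" using Suc.prems by auto
      show ?case
      proof (cases "j = \<pi> (Suc t)")
        case True then show ?thesis using step[OF st] unfolding best_response_def by auto
      next
        case False then show ?thesis using step[OF st] Suc by auto
      qed
    qed
  qed
  define L where "L i = last_move T \<pi> i" for i
  have Lprop: "\<And>i. i \<in> {1..n} \<Longrightarrow> L i \<in> {1..T} \<and> \<pi> (L i) = i \<and> (\<forall>t\<in>{1..T}. \<pi> t = i \<longrightarrow> t \<le> L i)"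
  proof -
    fix i assume i: "i \<in> {1..n}"
    have ne: "{t \<in> {1..T}. \<pi> t = i} \<noteq> {}" using cov[OF i] by auto
    have fin: "finite {t \<in> {1..T}. \<pi> t = i}" by auto
    show "L i \<in> {1..T} \<and> \<pi> (L i) = i \<and> (\<forall>t\<in>{1..T}. \<pi> t = i \<longrightarrow> t \<le> L i)"
      using Max_in[OF fin ne] Max_ge[OF fin] unfolding L_def last_move_def by auto
  qed
  have inj: "inj_on L {1..n}"
    by (rule inj_onI) (metis Lprop)
  have stable_step: "\<And>j t. j \<in> {1..n} \<Longrightarrow> L j \<le> t \<Longrightarrow> Suc t \<le> T \<Longrightarrow> S (Suc t) j = S t j"
  proof -
    fix j t assume j: "j \<in> {1..n}" and "L j \<le> t" "Suc t \<le> T"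
    hence st: "Suc t \<in> {1..T}" by auto
    have "\<pi> (Suc t) \<noteq> j" using Lprop[OF j] st \<open>L j \<le> t\<close> by fastforce
    thus "S (Suc t) j = S t j" using step[OF st] j by auto
  qed
  have stable_d: "\<And>j d. j \<in> {1..n} \<Longrightarrow> L j + d \<le> T \<Longrightarrow> S (L j + d) j = S (L j) j"
  proof -
    fix j d assume j: "j \<in> {1..n}"
    show "L j + d \<le> T \<Longrightarrow> S (L j + d) j = S (L j) j"
    proof (induction d)
      case 0 then show ?case by simp
    next
      case (Suc d)
      then show ?case using stable_step[OF j, of "L j + d"] by simp
    qed
  qed
  have stable: "\<And>j t. j \<in> {1..n} \<Longrightarrow> L j \<le> t \<Longrightarrow> t \<le> T \<Longrightarrow> S t j = S T j"
  proof -
    fix j t assume j: "j \<in> {1..n}" and "L j \<le> t" "t \<le> T"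
    have "L j \<le> T" using Lprop[OF j] by auto
    have "S t j = S (L j) j" using stable_d[OF j, of "t - L j"] \<open>L j \<le> t\<close> \<open>t \<le> T\<close> by simp
    moreover have "S T j = S (L j) j" using stable_d[OF j, of "T - L j"] \<open>L j \<le> T\<close> by simp
    ultimately show "S t j = S T j" by simp
  qed
  have finS: "\<And>t j. t \<le> T \<Longrightarrow> j \<in> {1..n} \<Longrightarrow> S t j \<subseteq> E"
    using valid sub by blast
  define G where "G i = (\<Sum>e\<in>E. load n Sopt e * (load n (S (L i - 1)) e + 1))" for i
  have br: "\<And>i. i \<in> {1..n} \<Longrightarrow> n * pcost n (S (L i)) i \<le> G i"
  proof -
    fix i assume i: "i \<in> {1..n}"
    define t where "t = L i"
    have t: "t \<in> {1..T}" "\<pi> t = i" using Lprop[OF i] unfolding t_def by auto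
    define Sp where "Sp = S (t - 1)"
    have brt: "best_response n \<Sigma> Sp i (S t i)" using step[OF t(1)] t(2) unfolding Sp_def by auto
    have agree: "\<forall>j\<in>{1..n}. S t j = (Sp(i := S t i)) j" using step[OF t(1)] t(2) unfolding Sp_def by auto
    have pc: "pcost n (S t) i = pcost n (Sp(i := S t i)) i" using pcost_cong[OF i agree] .
    have b1: "\<And>j. j \<in> {1..n} \<Longrightarrow> pcost n (S t) i \<le> (\<Sum>e\<in>Sopt j. load n Sp e + 1)"
    proof -
      fix j assume j: "j \<in> {1..n}"
      have "pcost n (S t) i \<le> pcost n (Sp(i := Sopt j)) i"
        using pc brt vopt[OF j] unfolding best_response_def by auto
      also have "\<dots> = (\<Sum>e\<in>Sopt j. load n (Sp(i := Sopt j)) e)" unfolding pcost_def by simp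
      also have "\<dots> \<le> (\<Sum>e\<in>Sopt j. load n Sp e + 1)" by (rule sum_mono) (rule load_upd)
      finally show "pcost n (S t) i \<le> (\<Sum>e\<in>Sopt j. load n Sp e + 1)" .
    qed
    have "n * pcost n (S t) i = (\<Sum>j\<in>{1..n}. pcost n (S t) i)" by simp
    also have "\<dots> \<le> (\<Sum>j\<in>{1..n}. \<Sum>e\<in>Sopt j. load n Sp e + 1)" by (rule sum_mono) (rule b1)
    also have "\<dots> = (\<Sum>e\<in>E. \<Sum>j\<in>{j\<in>{1..n}. e \<in> Sopt j}. load n Sp e + 1)"
      by (rule swap_sum[OF fE]) (use vopt sub in auto)
    also have "\<dots> = G i" unfolding G_def load_def Sp_def t_def by simp
    finally show "n * pcost n (S (L i)) i \<le> G i" unfolding t_def .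
  qed
  define U where "U e = {j\<in>{1..n}. e \<in> S T j}" for e
  have finU: "\<And>e. finite (U e)" unfolding U_def by auto
  have loadT: "\<And>e. load n (S T) e = card (U e)" unfolding load_def U_def by simp
  have sc: "social_cost n (S T) = (\<Sum>e\<in>E. \<Sum>i\<in>U e. card (U e))"
    unfolding social_cost_def pcost_def loadT U_def
    by (rule swap_sum[OF fE]) (use finS in auto)
  define Phi where "Phi = (\<Sum>e\<in>E. \<Sum>i\<in>U e. card {j\<in>U e. L j < L i} + 1)"
  have Phi2: "social_cost n (S T) \<le> 2 * Phi"
  proof -
    have "\<And>e. (\<Sum>i\<in>U e. card (U e)) \<le> 2 * (\<Sum>i\<in>U e. card {j\<in>U e. L j < L i} + 1)"
    proof -
      fix e
      have "inj_on L (U e)" using inj by (rule inj_on_subset) (auto simp: U_def)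
      from rank_sum[OF finU this] show "(\<Sum>i\<in>U e. card (U e)) \<le> 2 * (\<Sum>i\<in>U e. card {j\<in>U e. L j < L i} + 1)"
        by simp
    qed
    hence "(\<Sum>e\<in>E. \<Sum>i\<in>U e. card (U e)) \<le> (\<Sum>e\<in>E. 2 * (\<Sum>i\<in>U e. card {j\<in>U e. L j < L i} + 1))"
      by (rule sum_mono)
    thus ?thesis unfolding sc Phi_def by (simp add: sum_distrib_left)
  qed
  have Phi_le: "Phi \<le> (\<Sum>i\<in>{1..n}. pcost n (S (L i)) i)"
  proof -
    have "Phi = (\<Sum>i\<in>{1..n}. \<Sum>e\<in>S T i. card {j\<in>U e. L j < L i} + 1)"
      unfolding Phi_def U_def
      by (rule swap_sum[OF fE, symmetric]) (use finS in auto)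
    also have "\<dots> \<le> (\<Sum>i\<in>{1..n}. pcost n (S (L i)) i)"
    proof (rule sum_mono)
      fix i assume i: "i \<in> {1..n}"
      have LT: "L i \<le> T" using Lprop[OF i] by auto
      have eq: "S (L i) i = S T i" using stable[OF i order_refl LT] .
      show "(\<Sum>e\<in>S T i. card {j\<in>U e. L j < L i} + 1) \<le> pcost n (S (L i)) i"
        unfolding pcost_def eq
      proof (rule sum_mono)
        fix e assume e: "e \<in> S T i"
        have "insert i {j\<in>U e. L j < L i} \<subseteq> {j\<in>{1..n}. e \<in> S (L i) j}"
        proof
          fix j assume "j \<in> insert i {j\<in>U e. L j < L i}"
          then show "j \<in> {j\<in>{1..n}. e \<in> S (L i) j}"
          proof
            assume "j = i" thus ?thesis using i e eq by simp
          next
            assume j: "j \<in> {j\<in>U e. L j < L i}"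
            hence j1: "j \<in> {1..n}" "e \<in> S T j" "L j < L i" unfolding U_def by auto
            have "S (L i) j = S T j" using stable[OF j1(1) _ LT] j1(3) by simp
            thus ?thesis using j1 by simp
          qed
        qed
        hence "card (insert i {j\<in>U e. L j < L i}) \<le> card {j\<in>{1..n}. e \<in> S (L i) j}"
          by (intro card_mono) auto
        moreover have "card (insert i {j\<in>U e. L j < L i}) = card {j\<in>U e. L j < L i} + 1"
          using finU[of e] by simp
        ultimately show "card {j\<in>U e. L j < L i} + 1 \<le> load n (S (L i)) e"
          unfolding load_def by simp
      qed
    qed
    finally show ?thesis .
  qed
  show ?thesis
  proof (cases "n = 0")
    case True
    then show ?thesis unfolding social_cost_def Gamma_def by simp
  next
    case False
    have "n * (\<Sum>i\<in>{1..n}. pcost n (S (L i)) i) \<le> (\<Sum>i\<in>{1..n}. G i)"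
      unfolding sum_distrib_left by (rule sum_mono) (rule br)
    hence "real n * real (\<Sum>i\<in>{1..n}. pcost n (S (L i)) i) \<le> real (\<Sum>i\<in>{1..n}. G i)"
      by (metis of_nat_le_iff of_nat_mult)
    hence P: "real (\<Sum>i\<in>{1..n}. pcost n (S (L i)) i) \<le> (1 / real n) * real (\<Sum>i\<in>{1..n}. G i)"
      using False by (simp add: field_simps)
    have GG: "Gamma n E Sopt T S \<pi> = (1 / real n) * real (\<Sum>i\<in>{1..n}. G i)"
      unfolding Gamma_def G_def L_def by (simp add: algebra_simps)
    have "real (social_cost n (S T)) \<le> 2 * real (\<Sum>i\<in>{1..n}. pcost n (S (L i)) i)"
      using Phi2 Phi_le by linarith
    thus ?thesis using P GG by linarith
  qed
qed

end
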